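(* Let $(\rho,\sigma)\in\mathfrak V$ with $\sigma\le0$ and $P,Q\in W^{(l)}\setminus\{0\}$. If $\ell_{\rho,\sigma}(P)=\sum_{i=0}^{\alpha}\lambda_ix^{\frac rl-\frac{i\sigma}\rho}y^{s+i}$ and $\ell_{\rho,\sigma}(Q)=\sum_{j=0}^{\beta}\mu_jx^{\frac ul-\frac{j\sigma}\rho}y^{v+j}$ with $\lambda_0,\lambda_\alpha,\mu_0,\mu_\beta\neq0$, then $$[P,Q]_{\rho,\sigma}=\sum_{i=0}^{\alpha}\sum_{j=0}^{\beta}\lambda_i\mu_jc_{ij}\,x^{\frac{r+u}{l}-\frac{(i+j)\sigma}{\rho}-1}y^{s+v+i+j-1},$$ where $c_{ij}=\bigl(\frac ul-\frac{j\sigma}\rho,\,v+j\bigr)\times\bigl(\frac rl-\frac{i\sigma}\rho,\,s+i\bigr)$ and $(a_1,a_2)\times(b_1,b_2):=a_1b_2-a_2b_1$.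
   Context: $K$ is a field of characteristic zero, $l\in\mathbb{N}$. $W^{(l)}$ is the associative $K$-algebra with $K$-basis $\{X^{i/l}Y^j:i\in\mathbb{Z},j\in\mathbb{N}_0\}$, powers of $X$ multiplying as Laurent monomials and $[Y,X^\alpha]=\alpha X^{\alpha-1}$ for $\alpha\in\frac1l\mathbb{Z}$. $L^{(l)}=K[x^{\pm1/l},y]$, $\Psi^{(l)}(X^{i/l}Y^j)=x^{i/l}y^j$ ($K$-linear); supports are sets of exponents with nonzero coefficient. $\mathfrak V=\{(\rho,\sigma)\in\mathbb{Z}^2:\gcd(\rho,\sigma)=1,\rho+\sigma>0\}$. For $P\ne0$, $v_{\rho,\sigma}(P)=\max\{\rho a+\sigma b:(a,b)\in\mathrm{Supp}(P)\}$, $\ell_{\rho,\sigma}(P)\in L^{(l)}$ = sum of terms of $\Psi^{(l)}(P)$ attaining it. $[P,Q]_{\rho,\sigma}:=0$ if $[P,Q]=0$ or $v_{\rho,\sigma}([P,Q])<v_{\rho,\sigma}(P)+v_{\rho,\sigma}(Q)-(\rho+\sigma)$, and $:=\ell_{\rho,\sigma}([P,Q])$ otherwise. *)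

theory Defs
  imports Complex_Main
begin

text \<open>Elements of W^(l) and of L^(l) are both represented by their coefficient
functions: the value at (q,j) is the coefficient of X^q Y^j (resp. x^q y^j).
Psi^(l) is therefore the identity on coefficient functions.\<close>

type_synonym 'a wl = "rat \<times> nat \<Rightarrow> 'a"

definition supp :: "'a::zero wl \<Rightarrow> (rat \<times> nat) set" where
  "supp P = {z. P z \<noteq> 0}"

definition in_W :: "nat \<Rightarrow> 'a::zero wl \<Rightarrow> bool" where
  "in_W l P \<longleftrightarrow> finite (supp P) \<and>
     (\<forall>(q,j)\<in>supp P. of_nat l * q \<in> \<int>)"

definition ffact :: "rat \<Rightarrow> nat \<Rightarrow> 'a::field_char_0" where
  "ffact c t = (\<Prod>m<t. of_rat (c - of_nat m))"

text \<open>Product in W^(l): (X^a Y^j)(X^c Y^k) = sum_t C(j,t) c^{(t)} X^{a+c-t} Y^{j+k-t},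
 which follows from [Y, X^c] = c X^{c-1}.\<close>
definition wmult :: "'a::field_char_0 wl \<Rightarrow> 'a wl \<Rightarrow> 'a wl" where
  "wmult P Q = (\<lambda>(q,b). \<Sum>(a,j)\<in>supp P. \<Sum>(c,k)\<in>supp Q. \<Sum>t\<in>{0..j}.
      if q = a + c - of_nat t \<and> b + t = j + k
      then P (a,j) * Q (c,k) * of_nat (j choose t) * ffact c t else 0)"

definition wcomm :: "'a::field_char_0 wl \<Rightarrow> 'a wl \<Rightarrow> 'a wl" where
  "wcomm P Q = (\<lambda>z. wmult P Q z - wmult Q P z)"

definition vdeg :: "int \<Rightarrow> int \<Rightarrow> 'a::zero wl \<Rightarrow> rat" where
  "vdeg \<rho> \<sigma> P = Max ((\<lambda>(a,b). of_int \<rho> * a + of_int \<sigma> * of_nat b) ` supp P)"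

definition lead :: "int \<Rightarrow> int \<Rightarrow> 'a::zero wl \<Rightarrow> 'a wl" where
  "lead \<rho> \<sigma> P = (\<lambda>(a,b). if of_int \<rho> * a + of_int \<sigma> * of_nat b = vdeg \<rho> \<sigma> P
                           then P (a,b) else 0)"

definition bracket :: "int \<Rightarrow> int \<Rightarrow> 'a::field_char_0 wl \<Rightarrow> 'a wl \<Rightarrow> 'a wl" where
  "bracket \<rho> \<sigma> P Q =
     (if wcomm P Q = (\<lambda>_. 0) \<or>
         vdeg \<rho> \<sigma> (wcomm P Q) < vdeg \<rho> \<sigma> P + vdeg \<rho> \<sigma> Q - of_int (\<rho> + \<sigma>)
      then (\<lambda>_. 0) else lead \<rho> \<sigma> (wcomm P Q))"

definition in_frakV :: "int \<Rightarrow> int \<Rightarrow> bool" where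
  "in_frakV \<rho> \<sigma> \<longleftrightarrow> gcd \<rho> \<sigma> = 1 \<and> \<rho> + \<sigma> > 0"

end

theory Submission
  imports Defs
begin

definition wt :: "int \<Rightarrow> int \<Rightarrow> rat \<times> nat \<Rightarrow> rat" where
  "wt \<rho> \<sigma> z = of_int \<rho> * fst z + of_int \<sigma> * of_nat (snd z)"

lemma vdeg_ge: "finite (supp P) \<Longrightarrow> z \<in> supp P \<Longrightarrow> wt \<rho> \<sigma> z \<le> vdeg \<rho> \<sigma> P"
  unfolding vdeg_def wt_def
  by (rule Max_ge) (auto intro!: image_eqI[where x=z] simp: split_beta)

lemma lead_nz: "lead \<rho> \<sigma> P z \<noteq> 0 \<Longrightarrow> z \<in> supp P \<and> wt \<rho> \<sigma> z = vdeg \<rho> \<sigma> P"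
  by (cases z) (auto simp: lead_def supp_def wt_def split: if_splits)

lemma lead_eq: "wt \<rho> \<sigma> z = vdeg \<rho> \<sigma> P \<Longrightarrow> lead \<rho> \<sigma> P z = P z"
  by (cases z) (auto simp: lead_def wt_def)

lemma lead_sum:
  fixes L F :: "'b \<Rightarrow> 'a::comm_ring_1"
  assumes "finite S" "\<And>x. L x \<noteq> 0 \<Longrightarrow> x \<in> S"
    "\<And>x. L x = (\<Sum>i\<in>I. if x = X i then c i else 0)" "inj_on X I" "finite I"
  shows "(\<Sum>x\<in>S. L x * F x) = (\<Sum>i\<in>I. c i * F (X i))"
proof -
  have "(\<Sum>x\<in>S. L x * F x) = (\<Sum>x\<in>S. \<Sum>i\<in>I. if x = X i then c i * F x else 0)"
    unfolding assms(3) by (intro sum.cong refl) (auto simp: sum_distrib_right intro!: sum.cong)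
  also have "\<dots> = (\<Sum>i\<in>I. \<Sum>x\<in>S. if x = X i then c i * F x else 0)" by (rule sum.swap)
  also have "\<dots> = (\<Sum>i\<in>I. if X i \<in> S then c i * F (X i) else 0)"
    using assms(1) by (simp add: sum.delta)
  also have "\<dots> = (\<Sum>i\<in>I. c i * F (X i))"
  proof (rule sum.cong[OF refl])
    fix i assume i: "i \<in> I"
    have "L (X i) = (\<Sum>i'\<in>I. if i' = i then c i' else 0)"
      unfolding assms(3)[of "X i"]
      by (rule sum.cong[OF refl]) (use i assms(4) in \<open>auto simp: inj_on_def\<close>)
    also have "\<dots> = c i" using i assms(5) by (simp add: sum.delta)
    finally have Li: "L (X i) = c i" .
    show "(if X i \<in> S then c i * F (X i) else 0) = c i * F (X i)"
      using assms(2)[of "X i"] Li by (cases "c i = 0") auto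
  qed
  finally show ?thesis .
qed

definition G :: "'a::field_char_0 wl \<Rightarrow> 'a wl \<Rightarrow> rat \<Rightarrow> nat \<Rightarrow> rat \<times> nat \<Rightarrow> rat \<times> nat \<Rightarrow> 'a" where
  "G P Q q b x y = (\<Sum>t\<in>{0..snd x}. if q = fst x + fst y - of_nat t \<and> b + t = snd x + snd y
      then P x * Q y * of_nat (snd x choose t) * ffact (fst y) t else 0)"

lemma wmult_G: "wmult P Q (q,b) = (\<Sum>x\<in>supp P. \<Sum>y\<in>supp Q. G P Q q b x y)"
  unfolding wmult_def G_def by (simp add: split_beta) (intro sum.cong refl; simp)

lemma G_simp:
  assumes d: "(0::rat) < of_int \<rho> + of_int \<sigma>"
    and w: "wt \<rho> \<sigma> (q,b) > wt \<rho> \<sigma> x + wt \<rho> \<sigma> y - 2*(of_int \<rho> + of_int \<sigma>)"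
  shows "G P Q q b x y = P x * Q y * ((if q = fst x + fst y \<and> b = snd x + snd y then 1 else 0)
     + (if q = fst x + fst y - 1 \<and> b + 1 = snd x + snd y then of_nat (snd x) * of_rat (fst y) else 0))"
proof -
  define f where "f t = (if q = fst x + fst y - of_nat t \<and> b + t = snd x + snd y
      then P x * Q y * of_nat (snd x choose t) * ffact (fst y) t else 0)" for t
  have z: "f t = 0" if t: "t \<ge> 2" for t
  proof (rule ccontr)
    assume "f t \<noteq> 0"
    then have c: "q = fst x + fst y - of_nat t" "b + t = snd x + snd y" by (auto simp: f_def split: if_splits)
    from c(2) have bq: "of_nat b = (of_nat (snd x) + of_nat (snd y) - of_nat t :: rat)"
      by (metis add_diff_cancel_right' of_nat_add)
    have "wt \<rho> \<sigma> (q,b) = wt \<rho> \<sigma> x + wt \<rho> \<sigma> y - of_nat t * (of_int \<rho> + of_int \<sigma>)"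
      by (simp only: wt_def fst_conv snd_conv c(1) bq) (simp add: algebra_simps)
    moreover have "of_nat t * (of_int \<rho> + of_int \<sigma>) \<ge> 2 * (of_int \<rho> + of_int \<sigma>::rat)"
      using t d by (intro mult_right_mono) auto
    ultimately show False using w by linarith
  qed
  have "G P Q q b x y = (\<Sum>t\<in>{0..snd x}. (if t = 0 then f 0 else 0) + (if t = 1 then f 1 else 0))"
    unfolding G_def f_def[symmetric]
  proof (rule sum.cong[OF refl])
    fix t show "f t = (if t = 0 then f 0 else 0) + (if t = 1 then f 1 else 0)"
      using z[of t] by (cases "t = 0 \<or> t = 1") auto
  qed
  also have "\<dots> = f 0 + (if 1 \<le> snd x then f 1 else 0)"
    by (simp add: sum.distrib sum.delta)
  also have "\<dots> = P x * Q y * ((if q = fst x + fst y \<and> b = snd x + snd y then 1 else 0)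
     + (if q = fst x + fst y - 1 \<and> b + 1 = snd x + snd y then of_nat (snd x) * of_rat (fst y) else 0))"
    by (cases "snd x = 0") (auto simp: f_def ffact_def algebra_simps)
  finally show ?thesis .
qed

lemma vdeg_le: "finite (supp P) \<Longrightarrow> supp P \<noteq> {} \<Longrightarrow> (\<And>z. z \<in> supp P \<Longrightarrow> wt \<rho> \<sigma> z \<le> c) \<Longrightarrow> vdeg \<rho> \<sigma> P \<le> c"
  unfolding vdeg_def by (subst Max_le_iff) (auto simp: wt_def split_beta)

lemma finite_supp_wmult:
  assumes "finite (supp P)" "finite (supp Q)"
  shows "finite (supp (wmult P Q))"
proof -
  define M where "M = Max (snd ` supp P)"
  have "supp (wmult P Q) \<subseteq> (\<lambda>(x,y,t). (fst x + fst y - of_nat t, snd x + snd y - t)) ` (supp P \<times> supp Q \<times> {0..M})"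
  proof
    fix z assume z: "z \<in> supp (wmult P Q)"
    obtain q b where zq: "z = (q,b)" by (cases z)
    with z have "wmult P Q (q,b) \<noteq> 0" by (simp add: supp_def)
    then obtain x where x: "x \<in> supp P" and nz: "(\<Sum>y\<in>supp Q. G P Q q b x y) \<noteq> 0"
      unfolding wmult_G by (rule sum.not_neutral_contains_not_neutral)
    from nz obtain y where y: "y \<in> supp Q" and nz2: "G P Q q b x y \<noteq> 0"
      by (rule sum.not_neutral_contains_not_neutral)
    from nz2 obtain t where t: "t \<in> {0..snd x}" and c: "q = fst x + fst y - of_nat t \<and> b + t = snd x + snd y"
      unfolding G_def by (auto elim!: sum.not_neutral_contains_not_neutral split: if_splits)
    have "snd x \<le> M" using x assms(1) unfolding M_def by (intro Max_ge) auto
    then show "z \<in> (\<lambda>(x,y,t). (fst x + fst y - of_nat t, snd x + snd y - t)) ` (supp P \<times> supp Q \<times> {0..M})"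
      using x y t c zq by (auto intro!: image_eqI[where x="(x,y,t)"])
  qed
  then show ?thesis by (rule finite_subset) (use assms in auto)
qed

lemma wt_h: "q = fst x + fst y - 1 \<Longrightarrow> b + 1 = snd x + snd y \<Longrightarrow>
   wt \<rho> \<sigma> (q,b) = wt \<rho> \<sigma> x + wt \<rho> \<sigma> y - (of_int \<rho> + of_int \<sigma>)"
proof -
  assume c: "q = fst x + fst y - 1" "b + 1 = snd x + snd y"
  from c(2) have bq: "of_nat b = (of_nat (snd x) + of_nat (snd y) - 1 :: rat)"
    by (metis add_diff_cancel_right' of_nat_add of_nat_1)
  show ?thesis by (simp only: wt_def fst_conv snd_conv c(1) bq) (simp add: algebra_simps)
qed

theorem proposition2p5:
  fixes l :: nat and \<rho> \<sigma> r u :: int and s v \<alpha> \<beta> :: nat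
    and P Q :: "'a::field_char_0 wl" and lam mu :: "nat \<Rightarrow> 'a"
  assumes "l > 0"
    and "in_frakV \<rho> \<sigma>" and "\<sigma> \<le> 0"
    and "in_W l P" and "in_W l Q" and "P \<noteq> (\<lambda>_. 0)" and "Q \<noteq> (\<lambda>_. 0)"
    and "\<And>q b. lead \<rho> \<sigma> P (q,b) = (\<Sum>i\<le>\<alpha>.
            if q = of_int r / of_nat l - of_nat i * of_int \<sigma> / of_int \<rho> \<and> b = s + i
            then lam i else 0)"
    and "\<And>q b. lead \<rho> \<sigma> Q (q,b) = (\<Sum>j\<le>\<beta>.
            if q = of_int u / of_nat l - of_nat j * of_int \<sigma> / of_int \<rho> \<and> b = v + j
            then mu j else 0)"
    and "lam 0 \<noteq> 0" and "lam \<alpha> \<noteq> 0" and "mu 0 \<noteq> 0" and "mu \<beta> \<noteq> 0"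
  shows "\<And>q b. bracket \<rho> \<sigma> P Q (q,b) = (\<Sum>i\<le>\<alpha>. \<Sum>j\<le>\<beta>.
            if q = of_int (r + u) / of_nat l - of_nat (i + j) * of_int \<sigma> / of_int \<rho> - 1
               \<and> int b = int s + int v + int i + int j - 1
            then lam i * mu j *
              of_rat ((of_int u / of_nat l - of_nat j * of_int \<sigma> / of_int \<rho>) * of_nat (s + i)
                    - of_nat (v + j) * (of_int r / of_nat l - of_nat i * of_int \<sigma> / of_int \<rho>))
            else 0)"
proof -
  note leadP = assms(8) and leadQ = assms(9)
  define R where "R (q::rat) (b::nat) = (\<Sum>i\<le>\<alpha>. \<Sum>j\<le>\<beta>.
            if q = of_int (r + u) / of_nat l - of_nat (i + j) * of_int \<sigma> / of_int \<rho> - 1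
               \<and> int b = int s + int v + int i + int j - 1
            then lam i * mu j *
              of_rat ((of_int u / of_nat l - of_nat j * of_int \<sigma> / of_int \<rho>) * of_nat (s + i)
                    - of_nat (v + j) * (of_int r / of_nat l - of_nat i * of_int \<sigma> / of_int \<rho>))
            else 0)" for q b
  define p where "p i = (of_int r / of_nat l - of_nat i * of_int \<sigma> / of_int \<rho> :: rat)" for i
  define p' where "p' j = (of_int u / of_nat l - of_nat j * of_int \<sigma> / of_int \<rho> :: rat)" for j
  define SP where "SP = supp P"
  define SQ where "SQ = supp Q"
  define vP where "vP = vdeg \<rho> \<sigma> P"
  define vQ where "vQ = vdeg \<rho> \<sigma> Q"
  define d where "d = (of_int \<rho> + of_int \<sigma> :: rat)"
  define N where "N = vP + vQ - d"
  define LP where "LP = lead \<rho> \<sigma> P"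
  define LQ where "LQ = lead \<rho> \<sigma> Q"
  define h where "h (q::rat) (b::nat) (x::rat\<times>nat) (y::rat\<times>nat) = (if q = fst x + fst y - 1 \<and> b + 1 = snd x + snd y
     then of_nat (snd x) * of_rat (fst y) - of_nat (snd y) * of_rat (fst x) else (0::'a))" for q b x y
  define T where "T (q::rat) (b::nat) = (\<Sum>x\<in>SP. \<Sum>y\<in>SQ. LP x * LQ y * h q b x y)" for q b
  have fP: "finite SP" using assms(4) by (simp add: SP_def in_W_def)
  have fQ: "finite SQ" using assms(5) by (simp add: SQ_def in_W_def)
  have d0: "0 < d" using assms(2) by (simp add: d_def in_frakV_def)
  have wP: "wt \<rho> \<sigma> x \<le> vP" if "x \<in> SP" for x using vdeg_ge[OF fP[unfolded SP_def]] that by (simp add: SP_def vP_def)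
  have wQ: "wt \<rho> \<sigma> x \<le> vQ" if "x \<in> SQ" for x using vdeg_ge[OF fQ[unfolded SQ_def]] that by (simp add: SQ_def vQ_def)
  have LPx: "LP x = (\<Sum>i\<in>{..\<alpha>}. if x = (p i, s + i) then lam i else 0)" for x
    by (cases x) (simp add: LP_def leadP p_def)
  have LQx: "LQ x = (\<Sum>j\<in>{..\<beta>}. if x = (p' j, v + j) then mu j else 0)" for x
    by (cases x) (simp add: LQ_def leadQ p'_def)
  have LPn: "x \<in> SP \<and> wt \<rho> \<sigma> x = vP" if "LP x \<noteq> 0" for x
    using lead_nz[OF that[unfolded LP_def]] by (simp add: SP_def vP_def)
  have LQn: "x \<in> SQ \<and> wt \<rho> \<sigma> x = vQ" if "LQ x \<noteq> 0" for x
    using lead_nz[OF that[unfolded LQ_def]] by (simp add: SQ_def vQ_def)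
  have injP: "inj_on (\<lambda>i. (p i, s + i)) {..\<alpha>}" by (auto simp: inj_on_def)
  have injQ: "inj_on (\<lambda>j. (p' j, v + j)) {..\<beta>}" by (auto simp: inj_on_def)

  have R': "R q b = (\<Sum>i\<le>\<alpha>. \<Sum>j\<le>\<beta>.
            if q = of_int (r + u) / of_nat l - of_nat (i + j) * of_int \<sigma> / of_int \<rho> - 1
               \<and> int b = int s + int v + int i + int j - 1
            then lam i * mu j * of_rat (p' j * of_nat (s + i) - of_nat (v + j) * p i) else 0)" for q b
    unfolding R_def p_def p'_def ..
  have F1: "T q b = R q b" for q b
  proof -
    have "T q b = (\<Sum>x\<in>SP. LP x * (\<Sum>y\<in>SQ. LQ y * h q b x y))"
      unfolding T_def by (simp add: sum_distrib_left mult.assoc)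
    also have "\<dots> = (\<Sum>x\<in>SP. LP x * (\<Sum>j\<in>{..\<beta>}. mu j * h q b x (p' j, v + j)))"
      by (intro sum.cong refl arg_cong2[where f="(*)"] lead_sum[OF fQ _ LQx injQ]) (use LQn in auto)
    also have "\<dots> = (\<Sum>i\<in>{..\<alpha>}. lam i * (\<Sum>j\<in>{..\<beta>}. mu j * h q b (p i, s + i) (p' j, v + j)))"
      by (rule lead_sum[OF fP _ LPx injP]) (use LPn in auto)
    also have "\<dots> = R q b"
      unfolding R' sum_distrib_left
    proof (intro sum.cong refl)
      fix i j
      have e1: "of_int (r + u) / of_nat l - of_nat (i + j) * of_int \<sigma> / of_int \<rho> - 1 = p i + p' j - 1"
        by (simp add: p_def p'_def add_divide_distrib diff_divide_distrib algebra_simps)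
      have e2: "(int b = int s + int v + int i + int j - 1) \<longleftrightarrow> (b + 1 = s + i + (v + j))" by arith
      have e3: "of_rat (p' j * of_nat (s + i) - of_nat (v + j) * p i) =
          (of_nat (s+i) * of_rat (p' j) - of_nat (v+j) * of_rat (p i) :: 'a)"
        by (simp add: of_rat_diff of_rat_mult of_rat_add mult.commute del: of_nat_add)
      show "lam i * (mu j * h q b (p i, s + i) (p' j, v + j)) =
         (if q = of_int (r + u) / of_nat l - of_nat (i + j) * of_int \<sigma> / of_int \<rho> - 1
               \<and> int b = int s + int v + int i + int j - 1
            then lam i * mu j * of_rat (p' j * of_nat (s + i) - of_nat (v + j) * p i) else 0)"
        unfolding e1 e2 e3 h_def by simp
    qed
    finally show ?thesis .
  qed

  have F2: "T q b = 0" if ne: "wt \<rho> \<sigma> (q,b) \<noteq> N" for q b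
    unfolding T_def
  proof (intro sum.neutral ballI)
    fix x y assume "x \<in> SP" "y \<in> SQ"
    show "LP x * LQ y * h q b x y = 0"
    proof (rule ccontr)
      assume "LP x * LQ y * h q b x y \<noteq> 0"
      then have "LP x \<noteq> 0" "LQ y \<noteq> 0" "h q b x y \<noteq> 0" by auto
      then have "wt \<rho> \<sigma> x = vP" "wt \<rho> \<sigma> y = vQ" "q = fst x + fst y - 1" "b + 1 = snd x + snd y"
        using LPn LQn by (auto simp: h_def split: if_splits)
      then show False using ne wt_h[of q x y b \<rho> \<sigma>] by (simp add: N_def d_def)
    qed
  qed

  have F3: "wcomm P Q (q,b) = T q b" if ge: "N \<le> wt \<rho> \<sigma> (q,b)" for q b
  proof -
    have "wcomm P Q (q,b) = (\<Sum>x\<in>SP. \<Sum>y\<in>SQ. G P Q q b x y) - (\<Sum>y\<in>SQ. \<Sum>x\<in>SP. G Q P q b y x)"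
      by (simp add: wcomm_def wmult_G SP_def SQ_def)
    also have "\<dots> = (\<Sum>x\<in>SP. \<Sum>y\<in>SQ. G P Q q b x y - G Q P q b y x)"
    proof -
      have sw: "(\<Sum>y\<in>SQ. \<Sum>x\<in>SP. G Q P q b y x) = (\<Sum>x\<in>SP. \<Sum>y\<in>SQ. G Q P q b y x)"
        by (rule sum.swap)
      show ?thesis unfolding sw by (simp add: sum_subtractf)
    qed
    also have "\<dots> = T q b" unfolding T_def
    proof (intro sum.cong refl)
      fix x y assume x: "x \<in> SP" and y: "y \<in> SQ"
      have w1: "wt \<rho> \<sigma> (q,b) > wt \<rho> \<sigma> x + wt \<rho> \<sigma> y - 2*(of_int \<rho> + of_int \<sigma>)"
        using wP[OF x] wQ[OF y] ge d0 by (simp add: N_def d_def)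
      have w2: "wt \<rho> \<sigma> (q,b) > wt \<rho> \<sigma> y + wt \<rho> \<sigma> x - 2*(of_int \<rho> + of_int \<sigma>)"
        using w1 by simp
      have "G P Q q b x y - G Q P q b y x = P x * Q y * h q b x y"
        unfolding G_simp[OF d0[unfolded d_def] w1] G_simp[OF d0[unfolded d_def] w2] h_def
        by (auto simp: algebra_simps)
      also have "\<dots> = LP x * LQ y * h q b x y"
      proof (cases "h q b x y = 0")
        case False
        then have c: "q = fst x + fst y - 1" "b + 1 = snd x + snd y" by (auto simp: h_def split: if_splits)
        have "wt \<rho> \<sigma> x = vP" "wt \<rho> \<sigma> y = vQ"
          using wt_h[OF c, of \<rho> \<sigma>] ge wP[OF x] wQ[OF y] by (simp_all add: N_def d_def)
        then show ?thesis by (simp add: LP_def LQ_def lead_eq vP_def vQ_def)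
      qed simp
      finally show "G P Q q b x y - G Q P q b y x = LP x * LQ y * h q b x y" .
    qed
    finally show ?thesis .
  qed

  define W where "W = wcomm P Q"
  have fW: "finite (supp W)"
  proof (rule finite_subset)
    show "supp W \<subseteq> supp (wmult P Q) \<union> supp (wmult Q P)"
      by (auto simp: W_def wcomm_def supp_def)
    show "finite (supp (wmult P Q) \<union> supp (wmult Q P))"
      using finite_supp_wmult[of P Q] finite_supp_wmult[of Q P] fP fQ by (simp add: SP_def SQ_def)
  qed

  show "bracket \<rho> \<sigma> P Q (q,b) = R q b" for q b
  proof (cases "W = (\<lambda>_. 0) \<or> vdeg \<rho> \<sigma> W < N")
    case True
    then have br: "bracket \<rho> \<sigma> P Q (q,b) = 0"
      by (simp add: bracket_def W_def N_def vP_def vQ_def d_def)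
    show ?thesis
    proof (cases "wt \<rho> \<sigma> (q,b) = N")
      case eq: True
      have "W (q,b) = 0"
      proof (rule ccontr)
        assume nz: "W (q,b) \<noteq> 0"
        then have "W \<noteq> (\<lambda>_. 0)" by auto
        with True have "vdeg \<rho> \<sigma> W < N" by auto
        moreover have "wt \<rho> \<sigma> (q,b) \<le> vdeg \<rho> \<sigma> W" using vdeg_ge[OF fW] nz by (simp add: supp_def)
        ultimately show False using eq by simp
      qed
      then show ?thesis using F3[of q b] F1[of q b] eq br by (simp add: W_def)
    next
      case False
      then show ?thesis using F2 F1 br by metis
    qed
  next
    case False
    then have br: "bracket \<rho> \<sigma> P Q (q,b) = lead \<rho> \<sigma> W (q,b)"
      by (simp add: bracket_def W_def N_def vP_def vQ_def d_def)
    have Wnz: "W \<noteq> (\<lambda>_. 0)" and ge: "N \<le> vdeg \<rho> \<sigma> W" using False by auto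
    have ne: "supp W \<noteq> {}" using Wnz by (auto simp: supp_def)
    have le: "vdeg \<rho> \<sigma> W \<le> N"
    proof (rule vdeg_le[OF fW ne])
      fix z assume z: "z \<in> supp W"
      show "wt \<rho> \<sigma> z \<le> N"
      proof (rule ccontr)
        assume "\<not> wt \<rho> \<sigma> z \<le> N"
        then have "W z = 0" using F3[of "fst z" "snd z"] F2[of "fst z" "snd z"] by (simp add: W_def)
        with z show False by (simp add: supp_def)
      qed
    qed
    have vW: "vdeg \<rho> \<sigma> W = N" using le ge by simp
    have "lead \<rho> \<sigma> W (q,b) = (if wt \<rho> \<sigma> (q,b) = N then W (q,b) else 0)"
      by (simp add: lead_def wt_def vW)
    also have "\<dots> = R q b" using F1[of q b] F2[of q b] F3[of q b] by (simp add: W_def)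
    finally show ?thesis using br by simp
  qed
qed

end
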